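(* Let $\kappa=\frac4{27}$. For every positive integer $n$ and every $x$, $$\frac{(n+1)(3n+2)x}{6\kappa}\,{}_3F_2\left[\begin{matrix}-n,\frac{n+3}2,\frac{n+2}2\\ \frac43,\frac53\end{matrix};x\right]+{}_3F_2\left[\begin{matrix}-n-1,\frac{n+2}2,\frac{n+1}2\\ \frac13,\frac23\end{matrix};x\right]-{}_3F_2\left[\begin{matrix}-n,\frac{n+1}2,\frac n2\\ \frac13,\frac23\end{matrix};x\right]=0,$$ $$\frac{(n+1)(n+2)x}{2\kappa}\,{}_3F_2\left[\begin{matrix}-n,\frac{n+4}2,\frac{n+3}2\\ \frac43,\frac53\end{matrix};x\right]+{}_3F_2\left[\begin{matrix}-n-1,\frac{n+2}2,\frac{n+3}2\\ \frac13,\frac23\end{matrix};x\right]-{}_3F_2\left[\begin{matrix}-n,\frac{n+1}2,\frac{n+2}2\\ \frac13,\frac23\end{matrix};x\right]=0.$$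
   Context: ${}_3F_2\left[\begin{matrix}a_1,a_2,a_3\\ b_1,b_2\end{matrix};x\right]=\sum_{k\ge0}\frac{(a_1)_k(a_2)_k(a_3)_k}{(b_1)_k(b_2)_k}\frac{x^k}{k!}$, $(x)_k=x(x+1)\cdots(x+k-1)$, $(x)_0=1$; with $a_1$ a nonpositive integer these are polynomials in $x$. *)

theory Defs
  imports Complex_Main
begin

text \<open>Terminating 3F2 with first upper parameter a1 = -m (m a natural number).
  Since pochhammer (-m) k = 0 for k > m, the series is the finite sum up to k = m.\<close>
definition hyp3F2_term :: "real \<Rightarrow> real \<Rightarrow> real \<Rightarrow> real \<Rightarrow> real \<Rightarrow> real \<Rightarrow> nat \<Rightarrow> real" where
  "hyp3F2_term a1 a2 a3 b1 b2 x k =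
     pochhammer a1 k * pochhammer a2 k * pochhammer a3 k
     / (pochhammer b1 k * pochhammer b2 k) * x ^ k / fact k"

definition hyp3F2_term_poly :: "nat \<Rightarrow> real \<Rightarrow> real \<Rightarrow> real \<Rightarrow> real \<Rightarrow> real \<Rightarrow> real" where
  "hyp3F2_term_poly m a2 a3 b1 b2 x = (\<Sum>k\<le>m. hyp3F2_term (- real m) a2 a3 b1 b2 x k)"

definition kappa :: real where "kappa = 4 / 27"

end

theory Submission
  imports Defs
begin

lemma poch_pos43: "pochhammer (4/3::real) j > 0" "pochhammer (5/3::real) j > 0"
  by (auto intro: pochhammer_pos)

lemma term1:
  fixes n j :: nat and x :: real
  shows "(real n + 1) * (3 * real n + 2) * x / (6 * kappa)
           * (hyp3F2_term (- real n) ((real n + 3) / 2) ((real n + 2) / 2) (4/3) (5/3) x j)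
         + hyp3F2_term (- real (n+1)) ((real n + 2) / 2) ((real n + 1) / 2) (1/3) (2/3) x (Suc j)
         - hyp3F2_term (- real n) ((real n + 1) / 2) (real n / 2) (1/3) (2/3) x (Suc j) = 0"
proof -
  define A where "A = pochhammer (- real n) j"
  define B where "B = pochhammer ((real n + 3) / 2) j"
  define C where "C = pochhammer ((real n + 2) / 2) j"
  define D where "D = pochhammer (4/3::real) j"
  define E where "E = pochhammer (5/3::real) j"
  have D: "D > 0" "E > 0" using poch_pos43 by (auto simp: D_def E_def)
  have f: "fact j > (0::real)" by simp
  have 1: "pochhammer (- real (n+1)) (Suc j) = (- real n - 1) * A"
    unfolding A_def by (simp add: pochhammer_rec algebra_simps)
  have 2: "pochhammer ((real n + 2) / 2) (Suc j) = C * ((real n + 2)/2 + j)"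
    unfolding C_def by (simp add: pochhammer_rec')
  have 3: "pochhammer ((real n + 1) / 2) (Suc j) = (real n + 1)/2 * B"
    unfolding B_def by (simp add: pochhammer_rec algebra_simps add_divide_distrib)
  have 4: "pochhammer (- real n) (Suc j) = A * (- real n + j)"
    unfolding A_def by (simp add: pochhammer_rec')
  have 5: "pochhammer (real n / 2) (Suc j) = real n / 2 * C"
    unfolding C_def by (simp add: pochhammer_rec algebra_simps add_divide_distrib)
  have 6: "pochhammer (1/3::real) (Suc j) = 1/3 * D"
    unfolding D_def by (simp add: pochhammer_rec)
  have 7: "pochhammer (2/3::real) (Suc j) = 2/3 * E"
    unfolding E_def by (simp add: pochhammer_rec)
  show ?thesis
    unfolding hyp3F2_term_def 1 2 3 4 5 6 7 kappa_def
    unfolding A_def[symmetric] B_def[symmetric] C_def[symmetric] D_def[symmetric] E_def[symmetric]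
    unfolding fact_Suc
    using D f by (simp add: field_simps del: of_nat_Suc) (simp add: algebra_simps)
qed


lemma term2:
  fixes n j :: nat and x :: real
  shows "(real n + 1) * (real n + 2) * x / (2 * kappa)
           * hyp3F2_term (- real n) ((real n + 4) / 2) ((real n + 3) / 2) (4/3) (5/3) x j
         + hyp3F2_term (- real (n+1)) ((real n + 2) / 2) ((real n + 3) / 2) (1/3) (2/3) x (Suc j)
         - hyp3F2_term (- real n) ((real n + 1) / 2) ((real n + 2) / 2) (1/3) (2/3) x (Suc j) = 0"
proof -
  define A where "A = pochhammer (- real n) j"
  define B where "B = pochhammer ((real n + 4) / 2) j"
  define C where "C = pochhammer ((real n + 3) / 2) j"
  define D where "D = pochhammer (4/3::real) j"
  define E where "E = pochhammer (5/3::real) j"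
  have D: "D > 0" "E > 0" using poch_pos43 by (auto simp: D_def E_def)
  have f: "fact j > (0::real)" by simp
  have 1: "pochhammer (- real (n+1)) (Suc j) = (- real n - 1) * A"
    unfolding A_def by (simp add: pochhammer_rec algebra_simps)
  have 2: "pochhammer ((real n + 2) / 2) (Suc j) = (real n + 2)/2 * B"
    unfolding B_def by (simp add: pochhammer_rec algebra_simps add_divide_distrib)
  have 3: "pochhammer ((real n + 3) / 2) (Suc j) = C * ((real n + 3)/2 + j)"
    unfolding C_def by (simp add: pochhammer_rec')
  have 4: "pochhammer (- real n) (Suc j) = A * (- real n + j)"
    unfolding A_def by (simp add: pochhammer_rec')
  have 5: "pochhammer ((real n + 1) / 2) (Suc j) = (real n + 1) / 2 * C"
    unfolding C_def by (simp add: pochhammer_rec algebra_simps add_divide_distrib)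
  have 6: "pochhammer (1/3::real) (Suc j) = 1/3 * D"
    unfolding D_def by (simp add: pochhammer_rec)
  have 7: "pochhammer (2/3::real) (Suc j) = 2/3 * E"
    unfolding E_def by (simp add: pochhammer_rec)
  show ?thesis
    unfolding hyp3F2_term_def 1 2 3 4 5 6 7 kappa_def
    unfolding A_def[symmetric] B_def[symmetric] C_def[symmetric] D_def[symmetric] E_def[symmetric]
    unfolding fact_Suc
    using D f by (simp add: field_simps del: of_nat_Suc) (simp add: algebra_simps)
qed


lemma sum_comb:
  fixes K :: real and c d e :: "nat \<Rightarrow> real"
  assumes "d 0 = e 0" "e (Suc n) = 0" "\<And>j. K * c j + d (Suc j) - e (Suc j) = 0"
  shows "K * (\<Sum>j\<le>n. c j) + (\<Sum>k\<le>Suc n. d k) - (\<Sum>k\<le>n. e k) = 0"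
proof -
  have a: "(\<Sum>k\<le>Suc n. e k) = (\<Sum>k\<le>n. e k)" using assms(2) by simp
  have b: "(\<Sum>k\<le>Suc n. e k) = e 0 + (\<Sum>j\<le>n. e (Suc j))" by (rule sum.atMost_Suc_shift)
  from a b have 1: "(\<Sum>k\<le>n. e k) = e 0 + (\<Sum>j\<le>n. e (Suc j))" by simp
  have 2: "(\<Sum>k\<le>Suc n. d k) = d 0 + (\<Sum>j\<le>n. d (Suc j))" by (rule sum.atMost_Suc_shift)
  have "K * (\<Sum>j\<le>n. c j) + (\<Sum>k\<le>Suc n. d k) - (\<Sum>k\<le>n. e k)
      = (\<Sum>j\<le>n. K * c j + d (Suc j) - e (Suc j))"
    unfolding 1 2 using assms(1) by (simp add: sum_distrib_left sum.distrib sum_subtractf)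
  also have "\<dots> = 0" using assms(3) by simp
  finally show ?thesis .
qed

lemma e_vanish: "hyp3F2_term (- real n) a b c d x (Suc n) = 0"
  unfolding hyp3F2_term_def by (simp add: pochhammer_eq_0_iff)

theorem proposition7:
  fixes n :: nat and x :: real
  assumes "n \<ge> 1"
  shows "(real n + 1) * (3 * real n + 2) * x / (6 * kappa)
           * hyp3F2_term_poly n ((real n + 3) / 2) ((real n + 2) / 2) (4/3) (5/3) x
         + hyp3F2_term_poly (n + 1) ((real n + 2) / 2) ((real n + 1) / 2) (1/3) (2/3) x
         - hyp3F2_term_poly n ((real n + 1) / 2) (real n / 2) (1/3) (2/3) x = 0
       \<and> (real n + 1) * (real n + 2) * x / (2 * kappa)
           * hyp3F2_term_poly n ((real n + 4) / 2) ((real n + 3) / 2) (4/3) (5/3) x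
         + hyp3F2_term_poly (n + 1) ((real n + 2) / 2) ((real n + 3) / 2) (1/3) (2/3) x
         - hyp3F2_term_poly n ((real n + 1) / 2) ((real n + 2) / 2) (1/3) (2/3) x = 0"
  unfolding hyp3F2_term_poly_def Suc_eq_plus1[symmetric]
proof (intro conjI)
  show "(real n + 1) * (3 * real n + 2) * x / (6 * kappa)
           * (\<Sum>k\<le>n. hyp3F2_term (- real n) ((real n + 3) / 2) ((real n + 2) / 2) (4/3) (5/3) x k)
         + (\<Sum>k\<le>Suc n. hyp3F2_term (- real (Suc n)) ((real n + 2) / 2) ((real n + 1) / 2) (1/3) (2/3) x k)
         - (\<Sum>k\<le>n. hyp3F2_term (- real n) ((real n + 1) / 2) (real n / 2) (1/3) (2/3) x k) = 0"
    apply (rule sum_comb)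
      apply (simp add: hyp3F2_term_def)
     apply (rule e_vanish)
    by (rule term1[of n, unfolded Suc_eq_plus1[symmetric]])
  show "(real n + 1) * (real n + 2) * x / (2 * kappa)
           * (\<Sum>k\<le>n. hyp3F2_term (- real n) ((real n + 4) / 2) ((real n + 3) / 2) (4/3) (5/3) x k)
         + (\<Sum>k\<le>Suc n. hyp3F2_term (- real (Suc n)) ((real n + 2) / 2) ((real n + 3) / 2) (1/3) (2/3) x k)
         - (\<Sum>k\<le>n. hyp3F2_term (- real n) ((real n + 1) / 2) ((real n + 2) / 2) (1/3) (2/3) x k) = 0"
    apply (rule sum_comb)
      apply (simp add: hyp3F2_term_def)
     apply (rule e_vanish)
    by (rule term2[of n, unfolded Suc_eq_plus1[symmetric]])
qed

end
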